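(* Let $m$ be a nonzero non-unit element of a unique factorization domain $D$ with identity $e$. Then $\mathrm{Sep}(J(m))=\{k\in D: \gcd(k,m)\sim e\}$.
   Context: $J(m)=mD$, regarded as an ideal of the multiplicative semigroup $D_{mult}$; $\sim$ is the associate relation. For a subset $A$ of a semigroup $S$ (here $S=D_{mult}$): $\mathrm{Id}\,A=\{x\in S: xA\subseteq A,\ Ax\subseteq A\}$ and $\mathrm{Sep}\,A=\mathrm{Id}\,A\cap\mathrm{Id}(S\setminus A)$. *)

theory Defs
  imports "HOL-Computational_Algebra.Factorial_Ring"
begin

definition sgId :: "'a::times set \<Rightarrow> 'a set" where
  "sgId A = {x. (\<forall>a\<in>A. x * a \<in> A) \<and> (\<forall>a\<in>A. a * x \<in> A)}"

definition Sep :: "'a::times set \<Rightarrow> 'a set" where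
  "Sep A = sgId A \<inter> sgId (UNIV - A)"

definition J :: "'a::times \<Rightarrow> 'a set" where
  "J m = {m * d | d. True}"

end

theory Submission
  imports Defs
begin

theorem corollary1:
  fixes m :: "'a :: factorial_ring_gcd"
  assumes "m \<noteq> 0" and "\<not> is_unit m"
  shows "Sep (J m) = {k. gcd k m dvd 1 \<and> 1 dvd gcd k m}"
proof -
  have Jm: "J m = {a. m dvd a}" unfolding J_def by (auto simp: dvd_def)
  have S1: "sgId (J m) = UNIV" unfolding sgId_def Jm by auto
  have S2: "sgId (UNIV - J m) = {k. is_unit (gcd k m)}"
  proof (intro set_eqI iffI)
    fix x assume "x \<in> {k. is_unit (gcd k m)}"
    then have c: "coprime x m" by (simp add: coprime_iff_gcd_eq_1 is_unit_gcd)
    show "x \<in> sgId (UNIV - J m)" unfolding sgId_def Jm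
      using c by (auto simp: coprime_commute coprime_dvd_mult_left_iff coprime_dvd_mult_right_iff mult.commute)
  next
    fix x assume x: "x \<in> sgId (UNIV - J m)"
    show "x \<in> {k. is_unit (gcd k m)}"
    proof (rule ccontr)
      define g where "g = gcd x m"
      assume "x \<notin> {k. is_unit (gcd k m)}"
      then have ng: "\<not> is_unit g" by (simp add: g_def)
      define a where "a = m div g"
      have gm: "g dvd m" by (simp add: g_def)
      have gx: "g dvd x" by (simp add: g_def)
      have g0: "g \<noteq> 0" using assms(1) by (simp add: g_def)
      have ma: "m = g * a" using gm by (simp add: a_def)
      have "\<not> m dvd a"
      proof
        assume "m dvd a"
        then obtain c where "a = m * c" by (auto simp: dvd_def)
        then have "m * 1 = m * (g * c)" using ma by (metis mult.assoc mult.commute mult_1_right)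
        then have "1 = g * c" using assms(1) by (metis mult_left_cancel)
        then show False using ng by (metis dvd_triv_left)
      qed
      moreover obtain y where "x = g * y" using gx by (auto simp: dvd_def)
      then have "x * a = y * m" using ma by (simp add: ac_simps)
      moreover have "a \<in> UNIV - {a. m dvd a}" using calculation by simp
      ultimately have "x * a \<in> UNIV - {a. m dvd a}" using x unfolding sgId_def Jm by blast
      with \<open>x * a = y * m\<close> show False by simp
    qed
  qed
  show ?thesis unfolding Sep_def S1 S2 by auto
qed

end
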